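(* Assume the standing hypotheses described in the context. Take $t,\varepsilon,\theta\ge0$ and $x\in C$ such that \[\|x-x_0\|\le t<\bar t,\qquad \|F'(x_0)^{-1}F(x)\|\le f(t)+\varepsilon,\qquad t-(1+\theta)\frac{f(t)+\varepsilon}{f'(t)}<R.\] If $y\in\mathbb X$ and $\|F'(x_0)^{-1}[F(x)+F'(x)(y-x)]\|\le\theta\|F'(x_0)^{-1}F(x)\|$, then (1) $\|y-x\|\le-(1+\theta)\frac{f(t)+\varepsilon}{f'(t)}$; (2) $\|y-x_0\|\le t-(1+\theta)\frac{f(t)+\varepsilon}{f'(t)}<R$; (3) $\|F'(x_0)^{-1}F(y)\|\le f\Big(t-(1+\theta)\frac{f(t)+\varepsilon}{f'(t)}\Big)+\varepsilon+2\theta(f(t)+\varepsilon)$.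
   Context: Standing hypotheses: $\mathbb X,\mathbb Y$ are Banach spaces; $B(x,r)$ is the open ball. $R\in\mathbb R$, $C\subseteq\mathbb X$, $F:C\to\mathbb Y$ is continuous and continuously differentiable on $\mathrm{int}(C)$, $x_0\in\mathrm{int}(C)$ with $F'(x_0)$ non-singular, $f:[0,R)\to\mathbb R$ is continuously differentiable, $B(x_0,R)\subseteq C$, $\|F'(x_0)^{-1}[F'(y)-F'(x)]\|\le f'(\|y-x\|+\|x-x_0\|)-f'(\|x-x_0\|)$ for all $x,y\in B(x_0,R)$ with $\|x-x_0\|+\|y-x\|<R$, $\|F'(x_0)^{-1}F(x_0)\|\le f(0)$, and (h1) $f(0)>0$, $f'(0)=-1$; (h2) $f'$ is strictly increasing and convex; (h3) $f(t)<0$ for some $t\in(0,R)$. Notation: $\bar t:=\sup\{t\in[0,R):f'(t)<0\}$. *)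

theory Defs
  imports "HOL-Analysis.Analysis"
begin

definition tbar :: "(real \<Rightarrow> real) \<Rightarrow> real \<Rightarrow> real" where
  "tbar f' R = Sup {t. 0 \<le> t \<and> t < R \<and> f' t < 0}"

end

theory Submission
  imports Defs
begin


lemma convex_incr:
  fixes g :: "real \<Rightarrow> real"
  assumes cv: "convex_on {0..<R} g" and a: "0 \<le> a" "a \<le> b" "0 \<le> h" "b + h < R"
  shows "g (a + h) - g a \<le> g (b + h) - g b"
proof (cases "b + h - a = 0")
  case True
  then have "a = b" "h = 0" using a by auto
  then show ?thesis by simp
next
  case False
  define l where "l = (b - a) / (b + h - a)"
  have pos: "b + h - a > 0" using False a by auto
  have l01: "0 \<le> l" "l \<le> 1" using a pos by (auto simp: l_def divide_simps)
  have lp: "l * (b + h - a) = b - a" using pos by (simp add: l_def)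
  have e1: "a + h = (1 - (1 - l)) * a + (1 - l) * (b + h)"
    using lp by (simp add: algebra_simps)
  have e2: "b = (1 - l) * a + l * (b + h)"
    using lp by (simp add: algebra_simps)
  have A: "a \<in> {0..<R}" "b + h \<in> {0..<R}" using a by auto
  have "g (a + h) \<le> (1 - (1 - l)) * g a + (1 - l) * g (b + h)"
    using convex_onD[OF cv, of "1 - l" a "b + h"] l01 A e1 by simp
  moreover have "g b \<le> (1 - l) * g a + l * g (b + h)"
    using convex_onD[OF cv, of l a "b + h"] l01 A e2 by simp
  ultimately show ?thesis by (simp add: algebra_simps)
qed

theorem lemma4p1:
  fixes F :: "'a::banach \<Rightarrow> 'b::banach"
    and F' :: "'a \<Rightarrow> ('a \<Rightarrow>\<^sub>L 'b)"
    and Finv :: "'b \<Rightarrow>\<^sub>L 'a"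
    and C :: "'a set" and x0 :: 'a and R :: real
    and f f' :: "real \<Rightarrow> real"
    and t \<epsilon> \<theta> :: real and x y :: 'a
  assumes F_cont: "continuous_on C F"
    and F_deriv: "\<And>z. z \<in> interior C \<Longrightarrow> (F has_derivative blinfun_apply (F' z)) (at z)"
    and F'_cont: "continuous_on (interior C) F'"
    and x0_int: "x0 \<in> interior C"
    and Finv_left: "Finv o\<^sub>L F' x0 = id_blinfun"
    and Finv_right: "F' x0 o\<^sub>L Finv = id_blinfun"
    and f_deriv: "\<And>s. s \<in> {0..<R} \<Longrightarrow> (f has_real_derivative f' s) (at s within {0..<R})"
    and f'_cont: "continuous_on {0..<R} f'"
    and ball_sub: "ball x0 R \<subseteq> C"
    and majorant: "\<And>u v. u \<in> ball x0 R \<Longrightarrow> v \<in> ball x0 R \<Longrightarrow> norm (u - x0) + norm (v - u) < R \<Longrightarrow>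
        norm (Finv o\<^sub>L (F' v - F' u)) \<le> f' (norm (v - u) + norm (u - x0)) - f' (norm (u - x0))"
    and init: "norm (Finv (F x0)) \<le> f 0"
    and h1: "f 0 > 0" "f' 0 = -1"
    and h2: "strict_mono_on {0..<R} f'" "convex_on {0..<R} f'"
    and h3: "\<exists>s\<in>{0<..<R}. f s < 0"
    and t_nn: "t \<ge> 0" and eps_nn: "\<epsilon> \<ge> 0" and theta_nn: "\<theta> \<ge> 0"
    and xC: "x \<in> C"
    and x_t: "norm (x - x0) \<le> t" and t_lt: "t < tbar f' R"
    and Fx: "norm (Finv (F x)) \<le> f t + \<epsilon>"
    and step_lt: "t - (1 + \<theta>) * ((f t + \<epsilon>) / f' t) < R"
    and y_inexact: "norm (Finv (F x + F' x (y - x))) \<le> \<theta> * norm (Finv (F x))"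
  shows "norm (y - x) \<le> - ((1 + \<theta>) * ((f t + \<epsilon>) / f' t))
    \<and> norm (y - x0) \<le> t - (1 + \<theta>) * ((f t + \<epsilon>) / f' t)
    \<and> t - (1 + \<theta>) * ((f t + \<epsilon>) / f' t) < R
    \<and> norm (Finv (F y)) \<le> f (t - (1 + \<theta>) * ((f t + \<epsilon>) / f' t)) + \<epsilon> + 2 * \<theta> * (f t + \<epsilon>)"
  proof -
  have R_pos: "0 < R" using h3 by auto
  define S where "S = {t. 0 \<le> t \<and> t < R \<and> f' t < 0}"
  have "0 \<in> S" using h1 R_pos by (auto simp: S_def)
  moreover have "bdd_above S" by (auto simp: S_def bdd_above_def intro!: exI[of _ R])
  ultimately obtain s0 where s0: "s0 \<in> S" "t < s0"
    using t_lt less_cSup_iff[of S t] unfolding tbar_def S_def[symmetric] by blast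
  have tR: "t < R" using s0 by (auto simp: S_def)
  have "f' t < f' s0"
    using s0 h2(1) t_nn by (auto simp: S_def strict_mono_on_def)
  then have ft_neg: "f' t < 0" using s0 by (auto simp: S_def)
  define s where "s = norm (x - x0)"
  define d where "d = norm (y - x)"
  define D where "D = - ((1 + \<theta>) * ((f t + \<epsilon>) / f' t))"
  have fte: "0 \<le> f t + \<epsilon>" using Fx norm_ge_zero order_trans by blast
  have D_alt: "D = (1 + \<theta>) * (f t + \<epsilon>) / (- f' t)"
    by (simp add: D_def)
  have D_nn: "0 \<le> D" unfolding D_alt
    by (intro divide_nonneg_pos mult_nonneg_nonneg) (use fte ft_neg theta_nn in auto)
  have tD: "t - (1 + \<theta>) * ((f t + \<epsilon>) / f' t) = t + D" by (simp add: D_def)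
  have tDR: "t + D < R" using step_lt tD by simp
  have x_ball: "x \<in> ball x0 R" using x_t tR by (simp add: dist_norm norm_minus_commute)
  have x0_ball: "x0 \<in> ball x0 R" using R_pos by simp
  have st: "s \<le> t" "0 \<le> s" using x_t by (auto simp: s_def)
  have fs_le: "f' s \<le> f' t"
  proof (cases "s = t")
    case False
    then show ?thesis using st tR h2(1) by (auto simp: strict_mono_on_def intro!: less_imp_le)
  qed simp
  have Einv: "norm (Finv o\<^sub>L (F' x - F' x0)) \<le> f' s + 1"
    using majorant[OF x0_ball x_ball] st tR h1 by (simp add: s_def)
  have Finv0: "\<And>v. Finv (F' x0 v) = v"
    using Finv_left by (metis blinfun_apply_blinfun_compose id_blinfun.rep_eq id_apply)
  have low: "- f' t * norm v \<le> norm (Finv (F' x v))" for v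
  proof -
    have eq: "Finv (F' x v) = v + (Finv o\<^sub>L (F' x - F' x0)) v"
      by (simp add: blinfun.diff_right blinfun.diff_left Finv0)
    have "norm ((Finv o\<^sub>L (F' x - F' x0)) v) \<le> (f' s + 1) * norm v"
      using norm_blinfun[of "Finv o\<^sub>L (F' x - F' x0)" v] Einv
      by (meson mult_right_mono norm_ge_zero order_trans)
    then have "norm v - (f' s + 1) * norm v \<le> norm (Finv (F' x v))"
      unfolding eq using norm_triangle_ineq2[of v "- (Finv o\<^sub>L (F' x - F' x0)) v"]
      by (smt (verit) norm_diff_ineq norm_minus_cancel)
    moreover have "- f' t * norm v \<le> norm v - (f' s + 1) * norm v"
      using fs_le by (simp add: algebra_simps mult_left_mono)
    ultimately show ?thesis by linarith
  qed
  have lin: "Finv (F' x (y - x)) = Finv (F x + F' x (y - x)) - Finv (F x)"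
    by (simp add: blinfun.add_right)
  have "norm (Finv (F' x (y - x))) \<le> (1 + \<theta>) * (f t + \<epsilon>)"
  proof -
    have "norm (Finv (F' x (y - x))) \<le> \<theta> * norm (Finv (F x)) + norm (Finv (F x))"
      unfolding lin using y_inexact norm_triangle_ineq4 by (smt (verit))
    also have "\<dots> = (1 + \<theta>) * norm (Finv (F x))" by (simp add: algebra_simps)
    also have "\<dots> \<le> (1 + \<theta>) * (f t + \<epsilon>)" using Fx theta_nn by (simp add: mult_left_mono)
    finally show ?thesis .
  qed
  then have "- f' t * d \<le> (1 + \<theta>) * (f t + \<epsilon>)" using low[of "y - x"] by (simp add: d_def)
  then have dD: "d \<le> D" unfolding D_alt using ft_neg
    by (subst pos_le_divide_eq) (simp_all add: mult.commute)
  have P1: "norm (y - x) \<le> D" using dD by (simp add: d_def)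
  have P2: "norm (y - x0) \<le> t + D"
    using norm_triangle_ineq[of "y - x" "x - x0"] P1 x_t by simp
  have mono: "f' a \<le> f' b" if "0 \<le> a" "a \<le> b" "b < R" for a b
  proof (cases "a = b")
    case False
    then show ?thesis using that h2(1) by (auto simp: strict_mono_on_def intro!: less_imp_le)
  qed simp
  have P3: "norm (Finv (F y)) \<le> f (t + D) + \<epsilon> + 2 * \<theta> * (f t + \<epsilon>)"
  proof (cases "D = 0")
    case True
    then have "f t + \<epsilon> = 0" using D_alt ft_neg theta_nn by simp
    moreover have "y = x" using dD True D_nn by (simp add: d_def)
    ultimately show ?thesis using Fx True by simp
  next
    case False
    then have Dpos: "0 < D" using D_nn by simp
    define p where "p = (\<lambda>\<tau>::real. x + \<tau> *\<^sub>R (y - x))"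
    define h where "h = (\<lambda>\<tau>. Finv (F (p \<tau>)) - \<tau> *\<^sub>R Finv (F' x (y - x)))"
    define \<phi> where "\<phi> = (\<lambda>\<tau>. f (t + \<tau> * D) - \<tau> * D * f' t)"
    have d_nn: "0 \<le> d" by (simp add: d_def)
    have p_norm: "norm (p \<tau> - x0) \<le> s + \<tau> * d" if "0 \<le> \<tau>" for \<tau>
    proof -
      have "norm (p \<tau> - x0) \<le> norm (x - x0) + norm (\<tau> *\<^sub>R (y - x))"
        unfolding p_def using norm_triangle_ineq[of "x - x0" "\<tau> *\<^sub>R (y - x)"]
        by (simp add: algebra_simps)
      also have "\<dots> = s + \<tau> * d" using that by (simp add: s_def d_def)
      finally show ?thesis .
    qed
    have td_le: "\<tau> * d \<le> D" if "0 \<le> \<tau>" "\<tau> \<le> 1" for \<tau>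
      using mult_left_le_one_le[OF d_nn that] dD by linarith
    have p_ball: "p \<tau> \<in> ball x0 R" if "0 \<le> \<tau>" "\<tau> \<le> 1" for \<tau>
      using p_norm[OF that(1)] td_le[OF that] st tDR
      by (simp add: dist_norm norm_minus_commute)
    have ball_int: "ball x0 R \<subseteq> interior C" using ball_sub by (simp add: interior_maximal)
    have h_der: "(h has_vector_derivative (Finv ((F' (p \<tau>) - F' x) (y - x)))) (at \<tau>)"
      if "0 \<le> \<tau>" "\<tau> \<le> 1" for \<tau>
    proof -
      have pd: "(p has_vector_derivative (y - x)) (at \<tau>)" unfolding p_def
        by (auto intro!: derivative_eq_intros)
      have Fd: "(F has_derivative F' (p \<tau>)) (at (p \<tau>) within range p)"
        using F_deriv p_ball[OF that] ball_int has_derivative_at_withinI by blast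
      have "((F \<circ> p) has_vector_derivative F' (p \<tau>) (y - x)) (at \<tau>)"
        using vector_derivative_diff_chain_within[OF pd Fd] by simp
      then have "((\<lambda>\<tau>. Finv ((F \<circ> p) \<tau>)) has_vector_derivative Finv (F' (p \<tau>) (y - x))) (at \<tau>)"
        by (rule bounded_linear.has_vector_derivative[OF blinfun.bounded_linear_right])
      then have "(h has_vector_derivative Finv (F' (p \<tau>) (y - x)) - 1 *\<^sub>R Finv (F' x (y - x))) (at \<tau>)"
        unfolding h_def by (auto intro!: derivative_eq_intros simp: o_def)
      moreover have "Finv ((F' (p \<tau>) - F' x) (y - x)) = Finv (F' (p \<tau>) (y - x)) - 1 *\<^sub>R Finv (F' x (y - x))"
        by (simp add: blinfun.diff_left blinfun.diff_right)
      ultimately show ?thesis by simp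
    qed
    have h_cont: "continuous_on {0..1} h"
      using h_der by (auto intro!: continuous_at_imp_continuous_on has_vector_derivative_continuous)
    have fc: "continuous_on {0..<R} f"
      using f_deriv by (meson DERIV_continuous continuous_on_eq_continuous_within)
    have phi_cont: "continuous_on {0..1} \<phi>"
    proof -
      have "continuous_on {0..1} (\<lambda>\<tau>. f (t + \<tau> * D))"
      proof (rule continuous_on_compose2[OF fc])
        show "continuous_on {0..1} (\<lambda>\<tau>::real. t + \<tau> * D)" by (intro continuous_intros)
        show "(\<lambda>\<tau>::real. t + \<tau> * D) ` {0..1} \<subseteq> {0..<R}"
        proof
          fix z assume "z \<in> (\<lambda>\<tau>::real. t + \<tau> * D) ` {0..1}"
          then obtain \<tau> where tt: "\<tau> \<in> {0..1}" "z = t + \<tau> * D" by auto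
          then have "\<tau> * D \<le> D" "0 \<le> \<tau> * D" using mult_left_le_one_le[OF D_nn] D_nn by auto
          then have "t + \<tau> * D < R" "0 \<le> t + \<tau> * D" using t_nn tDR by linarith+
          then show "z \<in> {0..<R}" using tt by simp
        qed
      qed
      then show ?thesis unfolding \<phi>_def by (intro continuous_intros)
    qed
    have phi_der: "(\<phi> has_vector_derivative (f' (t + \<tau> * D) * D - D * f' t)) (at \<tau>)"
      if "0 < \<tau>" "\<tau> < 1" for \<tau>
    proof -
      have "\<tau> * D \<le> D" "0 < \<tau> * D" using mult_left_le_one_le[OF D_nn] Dpos that by auto
      then have "t + \<tau> * D < R" "0 < t + \<tau> * D" using t_nn tDR by linarith+
      then have "t + \<tau> * D \<in> {0<..<R}" by simp
      then have fD: "(f has_real_derivative f' (t + \<tau> * D)) (at (t + \<tau> * D))"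
        using f_deriv[of "t + \<tau> * D"] at_within_interior[of "t + \<tau> * D" "{0..<R}"] by auto
      have gD: "((\<lambda>\<tau>. t + \<tau> * D) has_real_derivative D) (at \<tau>)"
        by (auto intro!: derivative_eq_intros)
      have "((\<lambda>\<tau>. f (t + \<tau> * D)) has_real_derivative f' (t + \<tau> * D) * D) (at \<tau>)"
        using DERIV_chain2[OF fD gD] .
      then have "(\<phi> has_real_derivative f' (t + \<tau> * D) * D - D * f' t) (at \<tau>)"
        unfolding \<phi>_def by (auto intro!: derivative_eq_intros)
      then show ?thesis by (simp add: has_real_derivative_iff_has_vector_derivative)
    qed
    have bnd: "norm (Finv ((F' (p \<tau>) - F' x) (y - x))) \<le> f' (t + \<tau> * D) * D - D * f' t"
      if "0 < \<tau>" "\<tau> < 1" for \<tau>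
    proof -
      have t01: "0 \<le> \<tau>" "\<tau> \<le> 1" using that by auto
      have pmx: "norm (p \<tau> - x) = \<tau> * d" using t01 by (simp add: p_def d_def)
      have sR: "s + \<tau> * d < R" using td_le[OF t01] st tDR by linarith
      have "norm (Finv ((F' (p \<tau>) - F' x) (y - x))) \<le> norm (Finv o\<^sub>L (F' (p \<tau>) - F' x)) * d"
        using norm_blinfun[of "Finv o\<^sub>L (F' (p \<tau>) - F' x)" "y - x"] by (simp add: d_def)
      also have "\<dots> \<le> (f' (\<tau> * d + s) - f' s) * d"
        using majorant[OF x_ball p_ball[OF t01]] sR pmx d_nn
        by (simp add: s_def mult_right_mono)
      also have "\<dots> \<le> (f' (t + \<tau> * d) - f' t) * d"
        using convex_incr[OF h2(2), of s t "\<tau> * d"] st t01 d_nn td_le[OF t01] tDR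
        by (intro mult_right_mono) (auto simp: add.commute)
      also have "\<dots> \<le> (f' (t + \<tau> * D) - f' t) * D"
      proof (rule mult_mono)
        show "f' (t + \<tau> * d) - f' t \<le> f' (t + \<tau> * D) - f' t"
          using mono[of "t + \<tau> * d" "t + \<tau> * D"] t_nn t01 d_nn dD mult_left_le_one_le[OF D_nn t01] tDR
          by (simp add: mult_left_mono)
        show "0 \<le> f' (t + \<tau> * D) - f' t"
          using mono[of t "t + \<tau> * D"] t_nn t01 D_nn mult_left_le_one_le[OF D_nn t01] tDR by simp
      qed (use dD d_nn in auto)
      finally show ?thesis by (simp add: algebra_simps)
    qed
    have MV: "norm (h 1 - h 0) \<le> \<phi> 1 - \<phi> 0"
      by (rule differentiable_bound_general[OF zero_less_one h_cont phi_cont h_der phi_der bnd]) auto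
    have h10: "h 1 - h 0 = Finv (F y) - Finv (F x + F' x (y - x))"
      by (simp add: h_def p_def blinfun.add_right)
    have Dft: "D * f' t = - ((1 + \<theta>) * (f t + \<epsilon>))"
      using ft_neg by (simp add: D_def)
    have phi10: "\<phi> 1 - \<phi> 0 = f (t + D) + (1 + \<theta>) * (f t + \<epsilon>) - f t"
      using Dft by (simp add: \<phi>_def)
    have "norm (Finv (F y)) \<le> norm (Finv (F x + F' x (y - x))) + norm (h 1 - h 0)"
      unfolding h10 using norm_triangle_ineq[of "Finv (F x + F' x (y - x))" "Finv (F y) - Finv (F x + F' x (y - x))"]
      by simp
    also have "\<dots> \<le> \<theta> * (f t + \<epsilon>) + (f (t + D) + (1 + \<theta>) * (f t + \<epsilon>) - f t)"
      using y_inexact Fx theta_nn MV phi10 mult_left_mono[OF Fx theta_nn] by linarith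
    finally show ?thesis by (simp add: algebra_simps)
  qed
  show ?thesis using P1 P2 P3 tDR unfolding tD D_def by simp
qed

end
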